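(* Let $n\in\{2,3,\ldots\}$ and $p\in(0,1)$, let $K$ be the Erdős–Rényi random graph on vertex set $\{1,\ldots,n\}$ with edge probability $p$, and let $Y$ be the number of isolated vertices of $K$, with mean $\mu=n(1-p)^{n-1}$ and variance $\sigma^2=n(1-p)^{n-1}\big(1+np(1-p)^{n-2}-(1-p)^{n-2}\big)$. Let $M(\theta)=E\exp(\theta(Y-\mu)/\sigma)$. Define, for real $s$, $$\gamma_s=e^s(pe^s+1-p)^{n-2}(npe^s+1-p)+(n-1)p+1,\qquad H(\theta)=\frac{\mu}{2\sigma^2}\int_0^\theta s\,\gamma_{s/\sigma}\,ds.$$ Then: (i) $M(\theta)\le \exp H(\theta)$ for all $\theta\ge 0$, and for all $t>0$, $$P\Big(\frac{Y-\mu}{\sigma}\ge t\Big)\le \inf_{\theta\ge 0}\exp(-\theta t+H(\theta)).$$ (ii) $M(\theta)\le \exp(\mu\theta^2/\sigma^2)$ for all $\theta\le 0$, and for all $t>0$, $$P\Big(\frac{Y-\mu}{\sigma}\le -t\Big)\le \exp\Big(-\frac{t^2\sigma^2}{4\mu}\Big).$$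
   Context: The Erdős–Rényi random graph on $\{1,\ldots,n\}$ with edge probability $p$: the edge indicators $X_{uv}$, $u\ne v$ (unordered pairs), are independent Bernoulli($p$). A vertex is isolated if it has degree $0$. (The stated formulas for $\mu$ and $\sigma^2$ are the mean and variance of $Y$; $\sigma>0$.) *)

theory Defs
  imports "HOL-Analysis.Analysis" "HOL-Probability.Probability"
begin

text \<open>Unordered pairs {u,v} of distinct vertices in {1..n}, encoded as (u,v) with u < v.\<close>
definition er_pairs :: "nat \<Rightarrow> (nat \<times> nat) set" where
  "er_pairs n = {(u, v). 1 \<le> u \<and> u < v \<and> v \<le> n}"

definition er_graph :: "nat \<Rightarrow> real \<Rightarrow> ((nat \<times> nat) \<Rightarrow> bool) pmf" where
  "er_graph n p = Pi_pmf (er_pairs n) False (\<lambda>_. bernoulli_pmf p)"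

definition er_adj :: "((nat \<times> nat) \<Rightarrow> bool) \<Rightarrow> nat \<Rightarrow> nat \<Rightarrow> bool" where
  "er_adj X u v = (if u < v then X (u, v) else if v < u then X (v, u) else False)"

definition isolated_count :: "nat \<Rightarrow> ((nat \<times> nat) \<Rightarrow> bool) \<Rightarrow> nat" where
  "isolated_count n X = card {v \<in> {1..n}. \<forall>u \<in> {1..n}. u \<noteq> v \<longrightarrow> \<not> er_adj X u v}"

end

theory Submission
  imports Defs
begin

lemma fin_Pi_bool: "finite A \<Longrightarrow> finite (set_pmf (Pi_pmf A (d::bool) q))"
proof -
  assume fA: "finite A"
  have "set_pmf (Pi_pmf A d q) \<subseteq> PiE_dflt A d (\<lambda>_. UNIV)"
    using set_Pi_pmf_subset[OF fA, of d q] by (auto simp: PiE_dflt_def)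
  moreover have "finite (PiE_dflt A d (\<lambda>_. (UNIV::bool set)))" using fA by auto
  ultimately show ?thesis by (rule finite_subset)
qed

lemma E_sum:
  fixes f :: "'a \<Rightarrow> real"
  assumes "finite (set_pmf A)"
  shows "measure_pmf.expectation A f = (\<Sum>a\<in>set_pmf A. f a * pmf A a)"
  by (rule integral_measure_pmf_real) (use assms in auto)

lemma E_pair_iter:
  fixes F :: "'a \<times> 'b \<Rightarrow> real"
  assumes "finite (set_pmf A)" "finite (set_pmf B)"
  shows "measure_pmf.expectation (pair_pmf A B) F =
     measure_pmf.expectation B (\<lambda>b. measure_pmf.expectation A (\<lambda>a. F (a,b)))"
proof -
  have e: "measure_pmf.expectation (pair_pmf A B) F = (\<Sum>z\<in>set_pmf A \<times> set_pmf B. F z * pmf (pair_pmf A B) z)"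
    using assms by (subst E_sum) auto
  show ?thesis
  proof -
    have "(\<Sum>z\<in>set_pmf A \<times> set_pmf B. F z * pmf (pair_pmf A B) z)
        = (\<Sum>a\<in>set_pmf A. \<Sum>b\<in>set_pmf B. F (a,b) * (pmf A a * pmf B b))"
      by (simp add: sum.cartesian_product case_prod_unfold flip: pmf_pair)
    also have "\<dots> = (\<Sum>b\<in>set_pmf B. \<Sum>a\<in>set_pmf A. F (a,b) * (pmf A a * pmf B b))"
      by (rule sum.swap)
    also have "\<dots> = (\<Sum>b\<in>set_pmf B. (\<Sum>a\<in>set_pmf A. F (a,b) * pmf A a) * pmf B b)"
      by (intro sum.cong refl, subst sum_distrib_right) (simp add: mult_ac)
    finally show ?thesis using e by (simp add: E_sum[OF assms(1)] E_sum[OF assms(2)])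
  qed
qed

lemma E_pair_prod:
  fixes F :: "'a \<Rightarrow> real" and G :: "'b \<Rightarrow> real"
  assumes "finite (set_pmf A)" "finite (set_pmf B)"
  shows "measure_pmf.expectation (pair_pmf A B) (\<lambda>z. F (fst z) * G (snd z)) =
     measure_pmf.expectation A F * measure_pmf.expectation B G"
  using assms by (simp add: E_pair_iter)

lemma fin_bern: "finite (set_pmf (bernoulli_pmf p))"
  by (rule finite_subset[OF subset_UNIV]) simp

lemma E_Pi_insert:
  assumes "finite A" "x \<notin> A" "0 \<le> p" "p \<le> 1"
  shows "measure_pmf.expectation (Pi_pmf (insert x A) False (\<lambda>_. bernoulli_pmf p)) h
     = measure_pmf.expectation (Pi_pmf A False (\<lambda>_. bernoulli_pmf p))
          (\<lambda>Y. h (Y(x:=True)) * p + h (Y(x:=False)) * (1-p))"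
  using assms by (simp add: Pi_pmf_insert case_prod_unfold E_pair_iter[OF fin_bern fin_Pi_bool])

lemma harris:
  fixes f g :: "('a \<Rightarrow> bool) \<Rightarrow> real"
  assumes "finite A" "0 \<le> p" "p \<le> 1"
    and "mono f" and "antimono g"
  shows "measure_pmf.expectation (Pi_pmf A False (\<lambda>_. bernoulli_pmf p)) (\<lambda>X. f X * g X)
     \<le> measure_pmf.expectation (Pi_pmf A False (\<lambda>_. bernoulli_pmf p)) f *
        measure_pmf.expectation (Pi_pmf A False (\<lambda>_. bernoulli_pmf p)) g"
  using assms(1,4,5)
proof (induction A arbitrary: f g rule: finite_induct)
  case empty then show ?case by simp
next
  case (insert x A)
  let ?P = "Pi_pmf A False (\<lambda>_. bernoulli_pmf p)"
  have fP: "finite (set_pmf ?P)" by (rule fin_Pi_bool) fact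
  define F where "F Y = f (Y(x:=True)) * p + f (Y(x:=False)) * (1-p)" for Y
  define G where "G Y = g (Y(x:=True)) * p + g (Y(x:=False)) * (1-p)" for Y
  have upd: "\<And>(Y::'a\<Rightarrow>bool) Y' b. Y \<le> Y' \<Longrightarrow> Y(x:=b) \<le> Y'(x:=b)" by (auto simp: le_fun_def le_bool_def)
  have mF: "mono F"
  proof (rule monoI)
    fix Y Y' :: "'a \<Rightarrow> bool" assume "Y \<le> Y'"
    then have "f (Y(x:=True)) \<le> f (Y'(x:=True))" "f (Y(x:=False)) \<le> f (Y'(x:=False))"
      using monoD[OF insert.prems(1) upd] by blast+
    then show "F Y \<le> F Y'" unfolding F_def using assms(2,3)
      by (intro add_mono mult_right_mono) auto
  qed
  have mG: "antimono G"
  proof (rule antimonoI)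
    fix Y Y' :: "'a \<Rightarrow> bool" assume "Y \<le> Y'"
    then have "g (Y(x:=True)) \<ge> g (Y'(x:=True))" "g (Y(x:=False)) \<ge> g (Y'(x:=False))"
      using antimonoD[OF insert.prems(2) upd] by blast+
    then show "G Y \<ge> G Y'" unfolding G_def using assms(2,3)
      by (intro add_mono mult_right_mono) auto
  qed
  have pt: "f (Y(x:=True)) * g (Y(x:=True)) * p + f (Y(x:=False)) * g (Y(x:=False)) * (1-p)
        \<le> F Y * G Y" for Y
  proof -
    have le1: "Y(x:=False) \<le> Y(x:=True)" by (auto simp: le_fun_def)
    have a: "f (Y(x:=True)) - f (Y(x:=False)) \<ge> 0"
      using monoD[OF insert.prems(1) le1] by linarith
    have b: "g (Y(x:=False)) - g (Y(x:=True)) \<ge> 0"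
      using antimonoD[OF insert.prems(2) le1] by linarith
    have c: "p * (1-p) \<ge> 0" using assms(2,3) by simp
    have "F Y * G Y - (f (Y(x:=True)) * g (Y(x:=True)) * p + f (Y(x:=False)) * g (Y(x:=False)) * (1-p))
        = (p * (1-p)) * ((f (Y(x:=True)) - f (Y(x:=False))) * (g (Y(x:=False)) - g (Y(x:=True))))"
      unfolding F_def G_def by (simp add: algebra_simps)
    also have "\<dots> \<ge> 0" using a b c by simp
    finally show ?thesis by simp
  qed
  have "measure_pmf.expectation (Pi_pmf (insert x A) False (\<lambda>_. bernoulli_pmf p)) (\<lambda>X. f X * g X)
      = measure_pmf.expectation ?P (\<lambda>Y. f (Y(x:=True)) * g (Y(x:=True)) * p + f (Y(x:=False)) * g (Y(x:=False)) * (1-p))"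
    by (rule E_Pi_insert) (use insert.hyps assms in auto)
  also have "\<dots> \<le> measure_pmf.expectation ?P (\<lambda>Y. F Y * G Y)"
    by (intro integral_mono integrable_measure_pmf_finite fP pt)
  also have "\<dots> \<le> measure_pmf.expectation ?P F * measure_pmf.expectation ?P G"
    by (rule insert.IH[OF mF mG])
  also have "measure_pmf.expectation ?P F = measure_pmf.expectation (Pi_pmf (insert x A) False (\<lambda>_. bernoulli_pmf p)) f"
    unfolding F_def by (rule E_Pi_insert[symmetric]) (use insert.hyps assms in auto)
  also have "measure_pmf.expectation ?P G = measure_pmf.expectation (Pi_pmf (insert x A) False (\<lambda>_. bernoulli_pmf p)) g"
    unfolding G_def by (rule E_Pi_insert[symmetric]) (use insert.hyps assms in auto)
  finally show ?case .
qed

definition iso :: "nat \<Rightarrow> ((nat \<times> nat) \<Rightarrow> bool) \<Rightarrow> nat \<Rightarrow> bool" where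
  "iso n X v = (\<forall>u\<in>{1..n}. u \<noteq> v \<longrightarrow> \<not> er_adj X u v)"

definition kill :: "nat \<Rightarrow> ((nat \<times> nat) \<Rightarrow> bool) \<Rightarrow> (nat \<times> nat) \<Rightarrow> bool" where
  "kill v X e = (if fst e = v \<or> snd e = v then False else X e)"

definition deg :: "nat \<Rightarrow> ((nat \<times> nat) \<Rightarrow> bool) \<Rightarrow> nat \<Rightarrow> nat" where
  "deg n X v = card {u\<in>{1..n}. u \<noteq> v \<and> er_adj X u v}"

definition leaves :: "nat \<Rightarrow> ((nat \<times> nat) \<Rightarrow> bool) \<Rightarrow> nat \<Rightarrow> nat set" where
  "leaves n X v = {w\<in>{1..n}. w \<noteq> v \<and> er_adj X w v \<and> (\<forall>u\<in>{1..n}. u \<noteq> w \<longrightarrow> er_adj X u w \<longrightarrow> u = v)}"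

lemma ic_def: "isolated_count n X = card {v\<in>{1..n}. iso n X v}"
  unfolding isolated_count_def iso_def ..

lemma er_adj_sym: "er_adj X u w = er_adj X w u"
  unfolding er_adj_def by auto

lemma er_adj_kill: "er_adj (kill v X) u w = (er_adj X u w \<and> u \<noteq> v \<and> w \<noteq> v)"
  unfolding er_adj_def kill_def by auto

lemma iso_kill: "iso n X w \<Longrightarrow> iso n (kill v X) w"
  unfolding iso_def by (auto simp: er_adj_kill)

lemma iso_kill_same:
  assumes "iso n X v" "w \<in> {1..n}"
  shows "iso n (kill v X) w = iso n X w"
proof
  assume a: "iso n (kill v X) w"
  show "iso n X w" unfolding iso_def
  proof (intro ballI impI notI)
    fix u assume u: "u \<in> {1..n}" "u \<noteq> w" "er_adj X u w"
    show False
    proof (cases "u = v")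
      case True
      then show False using assms u by (auto simp: iso_def er_adj_sym)
    next
      case False
      show False
      proof (cases "w = v")
        case True then show False using assms u by (auto simp: iso_def)
      next
        case False
        then show False using a u \<open>u \<noteq> v\<close> by (auto simp: iso_def er_adj_kill)
      qed
    qed
  qed
qed (rule iso_kill)

lemma ic_kill_same: "iso n X v \<Longrightarrow> isolated_count n (kill v X) = isolated_count n X"
  unfolding ic_def by (intro arg_cong[where f=card]) (auto simp: iso_kill_same)

lemma ic_kill_ge: "isolated_count n X \<le> isolated_count n (kill v X)"
  unfolding ic_def by (intro card_mono) (auto intro: iso_kill)

lemma ic_kill_le: "isolated_count n (kill v X) \<le> isolated_count n X + 1 + card (leaves n X v)"
proof -
  have "{w\<in>{1..n}. iso n (kill v X) w} \<subseteq> {w\<in>{1..n}. iso n X w} \<union> ({v} \<union> leaves n X v)"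
  proof
    fix w assume w: "w \<in> {w\<in>{1..n}. iso n (kill v X) w}"
    show "w \<in> {w\<in>{1..n}. iso n X w} \<union> ({v} \<union> leaves n X v)"
    proof (cases "w = v \<or> iso n X w")
      case True then show ?thesis using w by auto
    next
      case False
      then obtain u where u: "u \<in> {1..n}" "u \<noteq> w" "er_adj X u w" and wv: "w \<noteq> v"
        by (auto simp: iso_def)
      have wk: "\<forall>u'\<in>{1..n}. u' \<noteq> w \<longrightarrow> \<not> (er_adj X u' w \<and> u' \<noteq> v \<and> w \<noteq> v)"
        using w unfolding iso_def er_adj_kill by blast
      have uv: "u = v" using wk u wv by blast
      have all: "\<forall>u'\<in>{1..n}. u' \<noteq> w \<longrightarrow> er_adj X u' w \<longrightarrow> u' = v"
        using wk wv by blast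
      have "er_adj X w v" using u uv er_adj_sym[of X v w] by simp
      then have "w \<in> leaves n X v" using w wv all unfolding leaves_def by blast
      then show ?thesis by auto
    qed
  qed
  then have "card {w\<in>{1..n}. iso n (kill v X) w} \<le> card ({w\<in>{1..n}. iso n X w} \<union> ({v} \<union> leaves n X v))"
    by (intro card_mono) (auto simp: leaves_def)
  also have "\<dots> \<le> card {w\<in>{1..n}. iso n X w} + card ({v} \<union> leaves n X v)" by (rule card_Un_le)
  also have "card ({v} \<union> leaves n X v) \<le> card {v} + card (leaves n X v)" by (rule card_Un_le)
  finally show ?thesis unfolding ic_def by simp
qed

lemma leaves_le_deg: "card (leaves n X v) \<le> deg n X v"
  unfolding deg_def leaves_def by (intro card_mono) auto

lemma sum_leaves: "(\<Sum>v\<in>{1..n}. card (leaves n X v)) \<le> n"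
proof -
  have "(\<Sum>v\<in>{1..n}. card (leaves n X v)) = card (\<Union>v\<in>{1..n}. leaves n X v)"
  proof (rule card_UN_disjoint[symmetric])
    show "\<forall>i\<in>{1..n}. \<forall>j\<in>{1..n}. i \<noteq> j \<longrightarrow> leaves n X i \<inter> leaves n X j = {}"
    proof (intro ballI impI)
      fix i j assume ij: "i \<in> {1..n}" "j \<in> {1..n}" "i \<noteq> j"
      show "leaves n X i \<inter> leaves n X j = {}"
      proof (rule ccontr)
        assume "leaves n X i \<inter> leaves n X j \<noteq> {}"
        then obtain w where wi: "w \<in> leaves n X i" and wj: "w \<in> leaves n X j" by blast
        have "er_adj X j w" "j \<noteq> w" using wj er_adj_sym[of X j w] unfolding leaves_def by auto
        then show False using wi ij unfolding leaves_def by blast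
      qed
    qed
  qed (auto simp: leaves_def)
  also have "\<dots> \<le> card {1..n}" by (intro card_mono) (auto simp: leaves_def)
  finally show ?thesis by simp
qed

lemma er_adj_mono: "X \<le> X' \<Longrightarrow> er_adj X u w \<Longrightarrow> er_adj X' u w"
  unfolding er_adj_def le_fun_def by (auto split: if_splits)

lemma ic_antimono: "X \<le> X' \<Longrightarrow> isolated_count n X' \<le> isolated_count n X"
  unfolding ic_def iso_def by (intro card_mono) (auto dest: er_adj_mono)

lemma deg_mono: "X \<le> X' \<Longrightarrow> deg n X v \<le> deg n X' v"
  unfolding deg_def by (intro card_mono) (auto dest: er_adj_mono)

definition star :: "nat \<Rightarrow> nat \<Rightarrow> (nat \<times> nat) set" where
  "star n v = {e\<in>er_pairs n. fst e = v \<or> snd e = v}"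

definition pr :: "nat \<Rightarrow> nat \<Rightarrow> nat \<times> nat" where
  "pr v u = (if u < v then (u, v) else (v, u))"

lemma fin_pairs: "finite (er_pairs n)"
proof -
  have "er_pairs n \<subseteq> {1..n} \<times> {1..n}" unfolding er_pairs_def by auto
  then show ?thesis by (rule finite_subset) auto
qed

lemma star_sub: "star n v \<subseteq> er_pairs n" unfolding star_def by auto

lemma fin_star: "finite (star n v)" using finite_subset[OF star_sub fin_pairs] .

lemma star_img: "v \<in> {1..n} \<Longrightarrow> star n v = pr v ` ({1..n} - {v})"
  unfolding star_def er_pairs_def pr_def
  by (auto simp: image_iff split: if_splits)

lemma pr_inj: "inj_on (pr v) (UNIV - {v})"
  unfolding pr_def inj_on_def by (auto split: if_splits)

lemma er_adj_pr: "u \<noteq> v \<Longrightarrow> er_adj X u v = X (pr v u)"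
  unfolding pr_def er_adj_def by auto

lemma card_star: "v \<in> {1..n} \<Longrightarrow> card (star n v) = n - 1"
proof -
  assume v: "v \<in> {1..n}"
  have "card (star n v) = card ({1..n} - {v})" unfolding star_img[OF v]
    by (rule card_image) (rule inj_on_subset[OF pr_inj], auto)
  also have "\<dots> = n - 1" using v by simp
  finally show ?thesis .
qed

lemma deg_star: "v \<in> {1..n} \<Longrightarrow> deg n X v = card {e\<in>star n v. X e}"
proof -
  assume v: "v \<in> {1..n}"
  have "{e\<in>star n v. X e} = pr v ` {u\<in>{1..n}. u \<noteq> v \<and> er_adj X u v}"
    unfolding star_img[OF v] by (auto simp: er_adj_pr)
  moreover have "inj_on (pr v) {u\<in>{1..n}. u \<noteq> v \<and> er_adj X u v}"
    by (rule inj_on_subset[OF pr_inj]) auto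
  ultimately show ?thesis unfolding deg_def by (simp add: card_image)
qed

lemma iso_star: "v \<in> {1..n} \<Longrightarrow> iso n X v = (\<forall>e\<in>star n v. \<not> X e)"
  unfolding iso_def star_img[of v n] by (auto simp: er_adj_pr)

lemma kill_split: "kill v (\<lambda>x. if x \<in> star n v then f x else g x) = kill v g"
  unfolding kill_def star_def by (auto simp: fun_eq_iff)

lemma fin_Om: "finite (set_pmf (er_graph n p))"
  unfolding er_graph_def by (rule fin_Pi_bool[OF fin_pairs])

lemma split_Om:
  "er_graph n p = map_pmf (\<lambda>z x. if x \<in> star n v then fst z x else snd z x)
     (pair_pmf (Pi_pmf (star n v) False (\<lambda>_. bernoulli_pmf p))
               (Pi_pmf (er_pairs n - star n v) False (\<lambda>_. bernoulli_pmf p)))"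
proof -
  have "er_pairs n = star n v \<union> (er_pairs n - star n v)" using star_sub by blast
  then have "er_graph n p = Pi_pmf (star n v \<union> (er_pairs n - star n v)) False (\<lambda>_. bernoulli_pmf p)"
    unfolding er_graph_def by simp
  also have "\<dots> = map_pmf (\<lambda>(f,g) x. if x \<in> star n v then f x else g x)
     (pair_pmf (Pi_pmf (star n v) False (\<lambda>_. bernoulli_pmf p))
               (Pi_pmf (er_pairs n - star n v) False (\<lambda>_. bernoulli_pmf p)))"
    by (rule Pi_pmf_union) (auto intro: fin_star finite_Diff fin_pairs)
  finally show ?thesis by (simp add: case_prod_unfold)
qed

lemma E_indicator_star:
  assumes "0 \<le> p" "p \<le> 1"
  shows "measure_pmf.expectation (Pi_pmf (star n v) False (\<lambda>_. bernoulli_pmf p))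
      (\<lambda>f. if \<forall>e\<in>star n v. \<not> f e then 1 else 0) = (1 - p) ^ card (star n v)"
proof -
  have eq: "(if \<forall>e\<in>star n v. \<not> f e then 1 else 0) = (\<Prod>e\<in>star n v. (\<lambda>e b. if b then 0 else 1::real) e (f e))" for f :: "nat \<times> nat \<Rightarrow> bool"
  proof (cases "\<forall>e\<in>star n v. \<not> f e")
    case True then show ?thesis by simp
  next
    case False
    then obtain e where "e \<in> star n v" "f e" by blast
    then show ?thesis using fin_star False by (subst prod_zero) auto
  qed
  have "measure_pmf.expectation (Pi_pmf (star n v) False (\<lambda>_. bernoulli_pmf p))
      (\<lambda>f. if \<forall>e\<in>star n v. \<not> f e then 1 else 0) =
      measure_pmf.expectation (Pi_pmf (star n v) False (\<lambda>_. bernoulli_pmf p))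
      (\<lambda>f. \<Prod>e\<in>star n v. (\<lambda>e b. if b then 0 else 1::real) e (f e))"
    by (simp only: eq)
  also have "\<dots> = (\<Prod>e\<in>star n v. measure_pmf.expectation (bernoulli_pmf p) (\<lambda>b. if b then 0 else 1::real))"
    by (rule expectation_prod_Pi_pmf) (auto intro: fin_star integrable_measure_pmf_finite fin_bern)
  also have "\<dots> = (1 - p) ^ card (star n v)" using assms by simp
  finally show ?thesis .
qed

lemma size_bias:
  fixes g :: "((nat \<times> nat) \<Rightarrow> bool) \<Rightarrow> real"
  assumes v: "v \<in> {1..n}" and p: "0 \<le> p" "p \<le> 1"
  shows "measure_pmf.expectation (er_graph n p) (\<lambda>X. (if iso n X v then 1 else 0) * g (kill v X))
     = (1 - p) ^ (n - 1) * measure_pmf.expectation (er_graph n p) (\<lambda>X. g (kill v X))"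
proof -
  let ?A = "Pi_pmf (star n v) False (\<lambda>_. bernoulli_pmf p)"
  let ?B = "Pi_pmf (er_pairs n - star n v) False (\<lambda>_. bernoulli_pmf p)"
  let ?h = "\<lambda>z x. if x \<in> star n v then fst z x else snd z x"
  have fA: "finite (set_pmf ?A)" by (rule fin_Pi_bool[OF fin_star])
  have fB: "finite (set_pmf ?B)" by (rule fin_Pi_bool) (auto intro: fin_pairs)
  have k: "kill v (?h z) = kill v (snd z)" for z using kill_split[of v n "fst z" "snd z"] by simp
  have i: "iso n (?h z) v = (\<forall>e\<in>star n v. \<not> fst z e)" for z
    using iso_star[OF v, of "?h z"] by simp
  have "measure_pmf.expectation (er_graph n p) (\<lambda>X. (if iso n X v then 1 else 0) * g (kill v X))
      = measure_pmf.expectation (pair_pmf ?A ?B) (\<lambda>z. (\<lambda>f. if \<forall>e\<in>star n v. \<not> f e then 1 else 0) (fst z) * (\<lambda>Z. g (kill v Z)) (snd z))"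
    by (subst split_Om[of n p v]) (simp add: k i)
  also have "\<dots> = (1 - p) ^ (n - 1) * measure_pmf.expectation ?B (\<lambda>Z. g (kill v Z))"
    using E_pair_prod[OF fA fB, of "\<lambda>f. if \<forall>e\<in>star n v. \<not> f e then 1 else 0" "\<lambda>Z. g (kill v Z)"]
      E_indicator_star[OF p, of n v] card_star[OF v] by simp
  also have "measure_pmf.expectation ?B (\<lambda>Z. g (kill v Z)) = measure_pmf.expectation (er_graph n p) (\<lambda>X. g (kill v X))"
    by (subst split_Om[of n p v]) (simp add: k expectation_pair_pmf_snd[of ?A ?B "\<lambda>Z. g (kill v Z)", simplified])
  finally show ?thesis .
qed

lemma E_prod_star:
  fixes \<phi> :: "nat \<times> nat \<Rightarrow> bool \<Rightarrow> real"
  assumes p: "0 \<le> p" "p \<le> 1" and nn: "\<And>e b. \<phi> e b \<ge> 0"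
  shows "measure_pmf.expectation (er_graph n p) (\<lambda>X. \<Prod>e\<in>star n v. \<phi> e (X e))
       = (\<Prod>e\<in>star n v. \<phi> e True * p + \<phi> e False * (1 - p))"
proof -
  have eq: "(\<Prod>e\<in>star n v. \<phi> e (X e)) = (\<Prod>e\<in>er_pairs n. (\<lambda>e b. if e \<in> star n v then \<phi> e b else 1) e (X e))" for X :: "nat \<times> nat \<Rightarrow> bool"
  proof -
    have "(\<Prod>e\<in>er_pairs n. (\<lambda>e b. if e \<in> star n v then \<phi> e b else 1) e (X e))
        = (\<Prod>e\<in>er_pairs n \<inter> star n v. \<phi> e (X e))"
      by (simp add: prod.inter_restrict[OF fin_pairs])
    also have "er_pairs n \<inter> star n v = star n v" using star_sub by blast
    finally show ?thesis by simp
  qed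
  have "measure_pmf.expectation (er_graph n p) (\<lambda>X. \<Prod>e\<in>star n v. \<phi> e (X e))
      = measure_pmf.expectation (er_graph n p) (\<lambda>X. \<Prod>e\<in>er_pairs n. (\<lambda>e b. if e \<in> star n v then \<phi> e b else 1) e (X e))"
    by (simp only: eq)
  also have "\<dots> = (\<Prod>e\<in>er_pairs n. measure_pmf.expectation (bernoulli_pmf p) (\<lambda>b. if e \<in> star n v then \<phi> e b else 1))"
    unfolding er_graph_def
    by (rule expectation_prod_Pi_pmf) (auto intro: fin_pairs integrable_measure_pmf_finite fin_bern nn)
  also have "\<dots> = (\<Prod>e\<in>er_pairs n. if e \<in> star n v then \<phi> e True * p + \<phi> e False * (1 - p) else 1)"
    using p by (intro prod.cong refl) auto
  also have "\<dots> = (\<Prod>e\<in>er_pairs n \<inter> star n v. \<phi> e True * p + \<phi> e False * (1 - p))"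
    by (simp add: prod.inter_restrict[OF fin_pairs])
  also have "er_pairs n \<inter> star n v = star n v" using star_sub by blast
  finally show ?thesis .
qed

lemma deg_sum: "v \<in> {1..n} \<Longrightarrow> real (deg n X v) = (\<Sum>e\<in>star n v. if X e then 1 else 0)"
proof -
  assume v: "v \<in> {1..n}"
  have "real (deg n X v) = (\<Sum>e\<in>{e\<in>star n v. X e}. 1)" by (simp add: deg_star[OF v])
  also have "\<dots> = (\<Sum>e\<in>star n v. if X e then 1 else 0)"
    by (rule sum.inter_filter[OF fin_star])
  finally show ?thesis .
qed

lemma E_deg:
  assumes v: "v \<in> {1..n}" and p: "0 \<le> p" "p \<le> 1"
  shows "measure_pmf.expectation (er_graph n p) (\<lambda>X. 1 + real (deg n X v)) = (real n - 1) * p + 1"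
proof -
  have comp: "measure_pmf.expectation (er_graph n p) (\<lambda>X. if X e then 1 else 0) = p" if e: "e \<in> star n v" for e
  proof -
    have "map_pmf (\<lambda>f. f e) (er_graph n p) = bernoulli_pmf p"
      unfolding er_graph_def using e star_sub by (subst Pi_pmf_component) (auto intro: fin_pairs)
    then have "measure_pmf.expectation (er_graph n p) (\<lambda>X. if X e then 1 else 0)
        = measure_pmf.expectation (bernoulli_pmf p) (\<lambda>b. if b then 1 else (0::real))"
      using integral_map_pmf[of "\<lambda>f. f e" "er_graph n p" "\<lambda>b. if b then 1 else (0::real)"] by simp
    then show ?thesis using p by simp
  qed
  have "measure_pmf.expectation (er_graph n p) (\<lambda>X. 1 + real (deg n X v))
     = measure_pmf.expectation (er_graph n p) (\<lambda>X. 1 + (\<Sum>e\<in>star n v. if X e then 1 else 0))"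
    by (simp add: deg_sum[OF v])
  also have "\<dots> = 1 + (\<Sum>e\<in>star n v. measure_pmf.expectation (er_graph n p) (\<lambda>X. if X e then 1 else 0))"
    by (subst Bochner_Integration.integral_add) (auto intro!: integrable_measure_pmf_finite fin_Om Bochner_Integration.integral_sum)
  also have "\<dots> = 1 + real (card (star n v)) * p" by (simp add: comp)
  also have "\<dots> = (real n - 1) * p + 1" using v by (simp add: card_star of_nat_diff)
  finally show ?thesis .
qed

lemma E_deg_exp:
  assumes v: "v \<in> {1..n}" and n: "n \<ge> 2" and p: "0 \<le> p" "p \<le> 1"
  shows "measure_pmf.expectation (er_graph n p)
      (\<lambda>X. (1 + real (deg n X v)) * exp (a * (1 + real (deg n X v))))
     = exp a * (p * exp a + 1 - p) ^ (n - 2) * (real n * p * exp a + 1 - p)"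
proof -
  define c where "c = p * exp a + 1 - p"
  define I where "I e (X::nat\<times>nat\<Rightarrow>bool) = (if X e then 1 else (0::real))" for e X
  define \<phi>0 where "\<phi>0 e b = exp (a * (if b then 1 else (0::real)))" for e :: "nat\<times>nat" and b :: bool
  define \<phi>1 where "\<phi>1 e0 e b = (if e = e0 then (if b then 1 else 0) else 1) * exp (a * (if b then 1 else (0::real)))"
    for e0 e :: "nat\<times>nat" and b :: bool
  let ?S = "star n v"
  have cS: "card ?S = n - 1" by (rule card_star[OF v])
  have D: "real (deg n X v) = (\<Sum>e\<in>?S. I e X)" for X unfolding I_def by (rule deg_sum[OF v])
  have ex: "exp (a * real (deg n X v)) = (\<Prod>e\<in>?S. \<phi>0 e (X e))" for X
    unfolding D sum_distrib_left \<phi>0_def I_def by (simp add: exp_sum[OF fin_star])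
  have ex1: "I e0 X * exp (a * real (deg n X v)) = (\<Prod>e\<in>?S. \<phi>1 e0 e (X e))" if e0: "e0 \<in> ?S" for X e0
  proof -
    have "(\<Prod>e\<in>?S. \<phi>1 e0 e (X e)) = (\<Prod>e\<in>?S. (if e = e0 then I e X else 1)) * (\<Prod>e\<in>?S. \<phi>0 e (X e))"
      unfolding \<phi>1_def \<phi>0_def I_def by (simp add: prod.distrib)
    also have "(\<Prod>e\<in>?S. (if e = e0 then I e X else 1)) = I e0 X" using e0 fin_star by simp
    finally show ?thesis using ex by simp
  qed
  have E0: "measure_pmf.expectation (er_graph n p) (\<lambda>X. exp (a * real (deg n X v))) = c ^ (n - 1)"
  proof -
    have "measure_pmf.expectation (er_graph n p) (\<lambda>X. exp (a * real (deg n X v)))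
        = measure_pmf.expectation (er_graph n p) (\<lambda>X. \<Prod>e\<in>?S. \<phi>0 e (X e))" by (simp only: ex)
    also have "\<dots> = (\<Prod>e\<in>?S. \<phi>0 e True * p + \<phi>0 e False * (1 - p))"
      by (rule E_prod_star[OF p]) (simp add: \<phi>0_def)
    also have "\<dots> = c ^ (n - 1)" by (simp add: \<phi>0_def c_def cS mult.commute add_diff_eq)
    finally show ?thesis .
  qed
  have E1: "measure_pmf.expectation (er_graph n p) (\<lambda>X. I e0 X * exp (a * real (deg n X v))) = p * exp a * c ^ (n - 2)"
    if e0: "e0 \<in> ?S" for e0
  proof -
    have "measure_pmf.expectation (er_graph n p) (\<lambda>X. I e0 X * exp (a * real (deg n X v)))
        = measure_pmf.expectation (er_graph n p) (\<lambda>X. \<Prod>e\<in>?S. \<phi>1 e0 e (X e))" by (simp only: ex1[OF e0])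
    also have "\<dots> = (\<Prod>e\<in>?S. \<phi>1 e0 e True * p + \<phi>1 e0 e False * (1 - p))"
      by (rule E_prod_star[OF p]) (simp add: \<phi>1_def)
    also have "\<dots> = (\<Prod>e\<in>?S. if e = e0 then p * exp a else c)"
      by (intro prod.cong refl) (simp add: \<phi>1_def c_def mult.commute add_diff_eq)
    also have "\<dots> = p * exp a * (\<Prod>e\<in>?S - {e0}. if e = e0 then p * exp a else c)"
      by (rule prod.remove[OF fin_star e0, THEN trans]) simp
    also have "(\<Prod>e\<in>?S - {e0}. if e = e0 then p * exp a else c) = (\<Prod>e\<in>?S - {e0}. c)"
      by (intro prod.cong refl) auto
    also have "\<dots> = c ^ (n - 2)" using cS e0 fin_star by (simp add: card_Diff_singleton numeral_2_eq_2)
    finally show ?thesis .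
  qed
  have pt: "(1 + real (deg n X v)) * exp (a * (1 + real (deg n X v)))
      = exp a * (exp (a * real (deg n X v)) + (\<Sum>e0\<in>?S. I e0 X * exp (a * real (deg n X v))))" for X
  proof -
    have "(\<Sum>e0\<in>?S. I e0 X * exp (a * real (deg n X v))) = real (deg n X v) * exp (a * real (deg n X v))"
      unfolding D by (simp add: sum_distrib_right)
    then show ?thesis by (simp add: algebra_simps exp_add)
  qed
  have int: "integrable (measure_pmf (er_graph n p)) f" for f :: "_ \<Rightarrow> real" by (rule integrable_measure_pmf_finite[OF fin_Om])
  have "measure_pmf.expectation (er_graph n p)
      (\<lambda>X. (1 + real (deg n X v)) * exp (a * (1 + real (deg n X v))))
      = measure_pmf.expectation (er_graph n p)
      (\<lambda>X. exp a * (exp (a * real (deg n X v)) + (\<Sum>e0\<in>?S. I e0 X * exp (a * real (deg n X v)))))"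
    by (simp only: pt)
  also have "\<dots> = exp a * (measure_pmf.expectation (er_graph n p) (\<lambda>X. exp (a * real (deg n X v)))
      + (\<Sum>e0\<in>?S. measure_pmf.expectation (er_graph n p) (\<lambda>X. I e0 X * exp (a * real (deg n X v)))))"
    by (simp only: Bochner_Integration.integral_mult_right_zero Bochner_Integration.integral_add[OF int int]
        Bochner_Integration.integral_sum[OF int])
  also have "\<dots> = exp a * (c ^ (n - 1) + (\<Sum>e0\<in>?S. p * exp a * c ^ (n - 2)))"
    by (simp add: E0 E1)
  also have "\<dots> = exp a * (c ^ (n - 1) + real (n - 1) * p * exp a * c ^ (n - 2))" by (simp add: cS)
  also have "exp a * (c ^ (n - 1) + real (n - 1) * p * exp a * c ^ (n - 2))
     = exp a * c ^ (n - 2) * (c + real (n - 1) * p * exp a)"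
  proof -
    have nn: "n - 1 = Suc (n - 2)" using n by simp
    have "c ^ (n - 1) = c * c ^ (n - 2)" unfolding nn by simp
    then show ?thesis by (simp add: algebra_simps)
  qed
  also have "c + real (n - 1) * p * exp a = real n * p * exp a + 1 - p"
    using n by (simp add: c_def of_nat_diff algebra_simps)
  finally show ?thesis by (simp add: c_def)
qed

lemma exp_aux1: "exp t * (1 - t) \<le> (1::real)"
proof -
  have "1 - t \<le> exp (- t)" using exp_ge_add_one_self[of "-t"] by simp
  then have "exp t * (1 - t) \<le> exp t * exp (-t)" by (intro mult_left_mono) auto
  then show ?thesis by (simp add: exp_minus)
qed

lemma exp_half:
  fixes t :: real assumes t: "0 \<le> t"
  shows "exp t - 1 \<le> t * (exp t + 1) / 2"
proof -
  define k where "k x = x * (exp x + 1) / 2 - exp x + 1" for x :: real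
  have der: "(k has_real_derivative ((exp x + 1) / 2 + x * exp x / 2 - exp x)) (at x)" for x
    unfolding k_def by (auto intro!: derivative_eq_intros simp: algebra_simps)
  have "k 0 \<le> k t"
  proof (rule DERIV_nonneg_imp_increasing_open[OF t])
    fix x :: real assume "0 < x" "x < t"
    have "(exp x + 1) / 2 + x * exp x / 2 - exp x = (1 - exp x * (1 - x)) / 2" by (simp add: algebra_simps)
    also have "\<dots> \<ge> 0" using exp_aux1[of x] by simp
    finally show "\<exists>y. (k has_real_derivative y) (at x) \<and> 0 \<le> y" using der by blast
  next
    show "continuous_on {0..t} k" unfolding k_def by (intro continuous_intros) auto
  qed
  then show ?thesis unfolding k_def by simp
qed

lemma ic_sum: "real (isolated_count n X) = (\<Sum>v\<in>{1..n}. if iso n X v then 1 else 0)"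
proof -
  have "real (isolated_count n X) = (\<Sum>v\<in>{v\<in>{1..n}. iso n X v}. 1)" by (simp add: ic_def)
  also have "\<dots> = (\<Sum>v\<in>{1..n}. if iso n X v then 1 else 0)" by (rule sum.inter_filter) simp
  finally show ?thesis .
qed

definition ES :: "nat \<Rightarrow> real \<Rightarrow> real \<Rightarrow> real \<Rightarrow> ((nat \<times> nat) \<Rightarrow> bool) \<Rightarrow> real" where
  "ES n mu sig s X = exp (s * (real (isolated_count n X) - mu) / sig)"

lemma int_Om: "integrable (measure_pmf (er_graph n p)) (f :: _ \<Rightarrow> real)"
  by (rule integrable_measure_pmf_finite[OF fin_Om])

lemma deriv_identity:
  fixes s mu sig :: real
  assumes n: "n \<ge> 1" and p: "0 \<le> p" "p \<le> 1" and mu: "mu = real n * (1 - p) ^ (n - 1)"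
  shows "measure_pmf.expectation (er_graph n p)
           (\<lambda>X. (real (isolated_count n X) - mu) / sig * ES n mu sig s X)
       = mu / (sig * real n) * (\<Sum>v\<in>{1..n}. measure_pmf.expectation (er_graph n p)
           (\<lambda>X. ES n mu sig s (kill v X) - ES n mu sig s X))"
proof -
  let ?E = "measure_pmf.expectation (er_graph n p)"
  let ?q = "(1 - p) ^ (n - 1)"
  have "?E (\<lambda>X. (real (isolated_count n X) - mu) / sig * ES n mu sig s X)
      = (?E (\<lambda>X. real (isolated_count n X) * ES n mu sig s X) - mu * ?E (ES n mu sig s)) / sig"
    by (simp add: diff_divide_distrib left_diff_distrib int_Om)
  also have "?E (\<lambda>X. real (isolated_count n X) * ES n mu sig s X)
      = (\<Sum>v\<in>{1..n}. ?E (\<lambda>X. (if iso n X v then 1 else 0) * ES n mu sig s X))"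
    unfolding ic_sum sum_distrib_right by (rule Bochner_Integration.integral_sum[OF int_Om])
  also have "\<dots> = (\<Sum>v\<in>{1..n}. ?E (\<lambda>X. (if iso n X v then 1 else 0) * ES n mu sig s (kill v X)))"
    by (intro sum.cong refl arg_cong[where f="?E"]) (auto simp: fun_eq_iff ES_def ic_kill_same)
  also have "\<dots> = (\<Sum>v\<in>{1..n}. ?q * ?E (\<lambda>X. ES n mu sig s (kill v X)))"
    by (intro sum.cong refl size_bias p) auto
  also have "mu * ?E (ES n mu sig s) = (\<Sum>v\<in>{1..n}. ?q * ?E (ES n mu sig s))"
    by (simp add: mu)
  finally have "?E (\<lambda>X. (real (isolated_count n X) - mu) / sig * ES n mu sig s X)
     = ((\<Sum>v\<in>{1..n}. ?q * ?E (\<lambda>X. ES n mu sig s (kill v X))) - (\<Sum>v\<in>{1..n}. ?q * ?E (ES n mu sig s))) / sig" .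
  also have "\<dots> = ?q / sig * (\<Sum>v\<in>{1..n}. ?E (\<lambda>X. ES n mu sig s (kill v X)) - ?E (ES n mu sig s))"
    by (simp only: sum_subtractf[symmetric] right_diff_distrib[symmetric] sum_distrib_left[symmetric] times_divide_eq_left mult.commute)
  also have "?q / sig = mu / (sig * real n)" using n by (simp add: mu)
  finally show ?thesis by (simp add: int_Om)
qed

lemma ES_kill: "ES n mu sig s (kill v X) = ES n mu sig s X *
   exp (s / sig * (real (isolated_count n (kill v X)) - real (isolated_count n X)))"
  unfolding ES_def by (simp add: exp_add[symmetric] diff_divide_distrib right_diff_distrib)

lemma ES_pos: "ES n mu sig s X > 0" unfolding ES_def by simp

lemma sum_Delta: "(\<Sum>v\<in>{1..n}. real (isolated_count n (kill v X)) - real (isolated_count n X)) \<le> 2 * real n"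
proof -
  have "(\<Sum>v\<in>{1..n}. real (isolated_count n (kill v X)) - real (isolated_count n X))
     \<le> (\<Sum>v\<in>{1..n}. 1 + real (card (leaves n X v)))"
  proof (rule sum_mono)
    fix v show "real (isolated_count n (kill v X)) - real (isolated_count n X) \<le> 1 + real (card (leaves n X v))"
      using ic_kill_le[of n v X] by linarith
  qed
  also have "\<dots> = real n + real (\<Sum>v\<in>{1..n}. card (leaves n X v))" by (simp add: sum.distrib)
  also have "\<dots> \<le> real n + real n" using sum_leaves[of n X] by linarith
  finally show ?thesis by simp
qed

lemma K_minus:
  assumes sig: "sig > 0" and s: "s \<le> 0"
  shows "(\<Sum>v\<in>{1..n}. measure_pmf.expectation (er_graph n p) (\<lambda>X. ES n mu sig s (kill v X) - ES n mu sig s X))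
     \<ge> 2 * real n * (s / sig) * measure_pmf.expectation (er_graph n p) (ES n mu sig s)"
proof -
  let ?E = "measure_pmf.expectation (er_graph n p)"
  have pt: "(\<Sum>v\<in>{1..n}. ES n mu sig s (kill v X) - ES n mu sig s X) \<ge> 2 * real n * (s / sig) * ES n mu sig s X" for X
  proof -
    define a where "a = s / sig"
    have a: "a \<le> 0" unfolding a_def using sig s by (simp add: divide_nonpos_pos)
    let ?D = "\<lambda>v. real (isolated_count n (kill v X)) - real (isolated_count n X)"
    have "ES n mu sig s (kill v X) - ES n mu sig s X \<ge> ES n mu sig s X * (a * ?D v)" for v
    proof -
      have "ES n mu sig s (kill v X) - ES n mu sig s X = ES n mu sig s X * (exp (a * ?D v) - 1)"
        unfolding ES_kill a_def by (simp add: algebra_simps)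
      also have "\<dots> \<ge> ES n mu sig s X * (a * ?D v)"
        using exp_ge_add_one_self[of "a * ?D v"] ES_pos[of n mu sig s X]
        by (intro mult_left_mono) linarith+
      finally show ?thesis .
    qed
    then have "(\<Sum>v\<in>{1..n}. ES n mu sig s (kill v X) - ES n mu sig s X) \<ge> (\<Sum>v\<in>{1..n}. ES n mu sig s X * (a * ?D v))"
      by (intro sum_mono) auto
    also have "(\<Sum>v\<in>{1..n}. ES n mu sig s X * (a * ?D v)) = (ES n mu sig s X * a) * (\<Sum>v\<in>{1..n}. ?D v)"
      by (simp add: sum_distrib_left mult.assoc)
    also have "(ES n mu sig s X * a) * (\<Sum>v\<in>{1..n}. ?D v) \<ge> (ES n mu sig s X * a) * (2 * real n)"
      using sum_Delta[of n X] ES_pos[of n mu sig s X] a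
      by (intro mult_left_mono_neg) (auto simp: mult_nonneg_nonpos)
    finally show ?thesis unfolding a_def by (simp add: mult_ac)
  qed
  have "2 * real n * (s / sig) * ?E (ES n mu sig s) = ?E (\<lambda>X. 2 * real n * (s / sig) * ES n mu sig s X)"
    by simp
  also have "\<dots> \<le> ?E (\<lambda>X. \<Sum>v\<in>{1..n}. ES n mu sig s (kill v X) - ES n mu sig s X)"
    by (intro integral_mono int_Om pt)
  also have "\<dots> = (\<Sum>v\<in>{1..n}. ?E (\<lambda>X. ES n mu sig s (kill v X) - ES n mu sig s X))"
    by (rule Bochner_Integration.integral_sum[OF int_Om])
  finally show ?thesis .
qed

lemma tmono: "0 \<le> t1 \<Longrightarrow> t1 \<le> t2 \<Longrightarrow> t1 * (exp t1 + 1) \<le> t2 * (exp t2 + (1::real))"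
  by (intro mult_mono add_right_mono) auto

lemma K_plus_pt:
  assumes sig: "sig > 0" and s: "s \<ge> 0"
  shows "ES n mu sig s (kill v X) - ES n mu sig s X \<le> (s / sig) / 2 *
     (((1 + real (deg n X v)) * exp ((s / sig) * (1 + real (deg n X v))) + (1 + real (deg n X v))) * ES n mu sig s X)"
proof -
  define a where "a = s / sig"
  have a: "a \<ge> 0" unfolding a_def using sig s by simp
  define D where "D = real (isolated_count n (kill v X)) - real (isolated_count n X)"
  define d where "d = 1 + real (deg n X v)"
  have D0: "D \<ge> 0" unfolding D_def using ic_kill_ge[of n X v] by simp
  have Dd: "D \<le> d" unfolding D_def d_def using ic_kill_le[of n v X] leaves_le_deg[of n X v] by linarith
  have "ES n mu sig s (kill v X) - ES n mu sig s X = ES n mu sig s X * (exp (a * D) - 1)"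
    unfolding ES_kill a_def D_def by (simp add: algebra_simps)
  also have "\<dots> \<le> ES n mu sig s X * ((a * D) * (exp (a * D) + 1) / 2)"
    using exp_half[of "a * D"] a D0 ES_pos[of n mu sig s X] by (intro mult_left_mono) auto
  also have "\<dots> \<le> ES n mu sig s X * ((a * d) * (exp (a * d) + 1) / 2)"
    using tmono[of "a * D" "a * d"] a D0 Dd ES_pos[of n mu sig s X]
    by (intro mult_left_mono divide_right_mono) (auto intro: mult_left_mono mult_nonneg_nonneg)
  also have "\<dots> = a / 2 * ((d * exp (a * d) + d) * ES n mu sig s X)" by (simp add: algebra_simps)
  finally show ?thesis unfolding a_def d_def .
qed

lemma K_plus:
  assumes n: "n \<ge> 2" and p: "0 \<le> p" "p \<le> 1" and sig: "sig > 0" and s: "s \<ge> 0"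
  shows "(\<Sum>v\<in>{1..n}. measure_pmf.expectation (er_graph n p) (\<lambda>X. ES n mu sig s (kill v X) - ES n mu sig s X))
     \<le> real n * ((s / sig) / 2 * (exp (s / sig) * (p * exp (s / sig) + 1 - p) ^ (n - 2) * (real n * p * exp (s / sig) + 1 - p)
                    + (real n - 1) * p + 1)) * measure_pmf.expectation (er_graph n p) (ES n mu sig s)"
proof -
  let ?E = "measure_pmf.expectation (er_graph n p)"
  define a where "a = s / sig"
  have a: "a \<ge> 0" unfolding a_def using sig s by simp
  define h where "h X v = (1 + real (deg n X v)) * exp (a * (1 + real (deg n X v))) + (1 + real (deg n X v))" for X v
  define gam where "gam = exp a * (p * exp a + 1 - p) ^ (n - 2) * (real n * p * exp a + 1 - p) + (real n - 1) * p + 1"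
  have each: "?E (\<lambda>X. ES n mu sig s (kill v X) - ES n mu sig s X) \<le> a / 2 * gam * ?E (ES n mu sig s)"
    if v: "v \<in> {1..n}" for v
  proof -
    have "?E (\<lambda>X. ES n mu sig s (kill v X) - ES n mu sig s X) \<le> ?E (\<lambda>X. a / 2 * (h X v * ES n mu sig s X))"
      by (intro integral_mono int_Om) (use K_plus_pt[OF sig s] in \<open>simp add: h_def a_def\<close>)
    also have "\<dots> = a / 2 * ?E (\<lambda>X. h X v * ES n mu sig s X)" by simp
    also have "?E (\<lambda>X. h X v * ES n mu sig s X) \<le> ?E (\<lambda>X. h X v) * ?E (ES n mu sig s)"
      unfolding er_graph_def
    proof (rule harris[OF fin_pairs p])
      show "mono (\<lambda>X. h X v)"
      proof (rule monoI)
        fix X X' :: "nat \<times> nat \<Rightarrow> bool" assume "X \<le> X'"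
        then have dd: "real (deg n X v) \<le> real (deg n X' v)" using deg_mono by simp
        have "exp (a * (1 + real (deg n X v))) \<le> exp (a * (1 + real (deg n X' v)))"
          using dd a by (simp add: mult_left_mono)
        then show "h X v \<le> h X' v" unfolding h_def using dd
          by (intro add_mono mult_mono) auto
      qed
      show "antimono (ES n mu sig s)"
      proof (rule antimonoI)
        fix X X' :: "nat \<times> nat \<Rightarrow> bool" assume "X \<le> X'"
        then have "real (isolated_count n X') \<le> real (isolated_count n X)" using ic_antimono by simp
        then have "s * (real (isolated_count n X') - mu) \<le> s * (real (isolated_count n X) - mu)"
          using s by (intro mult_left_mono) auto
        then show "ES n mu sig s X' \<le> ES n mu sig s X" unfolding ES_def using sig
          by (simp add: divide_right_mono)
      qed
    qed
    then have "a / 2 * ?E (\<lambda>X. h X v * ES n mu sig s X) \<le> a / 2 * (?E (\<lambda>X. h X v) * ?E (ES n mu sig s))"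
      using a by (intro mult_left_mono) auto
    also have "?E (\<lambda>X. h X v) = gam"
    proof -
      have "?E (\<lambda>X. h X v) = ?E (\<lambda>X. (1 + real (deg n X v)) * exp (a * (1 + real (deg n X v)))) + ?E (\<lambda>X. 1 + real (deg n X v))"
        unfolding h_def by (rule Bochner_Integration.integral_add[OF int_Om int_Om])
      also have "\<dots> = gam" unfolding gam_def E_deg_exp[OF v n p] E_deg[OF v p] by simp
      finally show ?thesis .
    qed
    finally show ?thesis by (simp add: mult_ac)
  qed
  have "(\<Sum>v\<in>{1..n}. ?E (\<lambda>X. ES n mu sig s (kill v X) - ES n mu sig s X)) \<le> (\<Sum>v\<in>{1..n}. a / 2 * gam * ?E (ES n mu sig s))"
    by (intro sum_mono each) auto
  also have "\<dots> = real n * (a / 2 * gam) * ?E (ES n mu sig s)" by simp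
  finally show ?thesis unfolding a_def gam_def .
qed

lemma M_deriv:
  "((\<lambda>\<theta>. measure_pmf.expectation (er_graph n p) (ES n mu sig \<theta>)) has_real_derivative
     measure_pmf.expectation (er_graph n p) (\<lambda>X. (real (isolated_count n X) - mu) / sig * ES n mu sig \<theta> X)) (at \<theta>)"
proof -
  let ?S = "set_pmf (er_graph n p)"
  have e1: "(\<lambda>\<theta>. measure_pmf.expectation (er_graph n p) (ES n mu sig \<theta>)) = (\<lambda>\<theta>. \<Sum>X\<in>?S. ES n mu sig \<theta> X * pmf (er_graph n p) X)"
    by (simp add: E_sum[OF fin_Om])
  have e2: "measure_pmf.expectation (er_graph n p) (\<lambda>X. (real (isolated_count n X) - mu) / sig * ES n mu sig \<theta> X)
     = (\<Sum>X\<in>?S. (real (isolated_count n X) - mu) / sig * ES n mu sig \<theta> X * pmf (er_graph n p) X)"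
    by (rule E_sum[OF fin_Om])
  have "((\<lambda>\<theta>. \<Sum>X\<in>?S. ES n mu sig \<theta> X * pmf (er_graph n p) X) has_real_derivative
      (\<Sum>X\<in>?S. (real (isolated_count n X) - mu) / sig * ES n mu sig \<theta> X * pmf (er_graph n p) X)) (at \<theta>)"
  proof (rule DERIV_sum)
    fix X
    define k where "k = (real (isolated_count n X) - mu) / sig"
    have "((\<lambda>\<theta>. exp (\<theta> * k) * pmf (er_graph n p) X) has_real_derivative
       exp (\<theta> * k) * k * pmf (er_graph n p) X) (at \<theta>)"
      by (auto intro!: derivative_eq_intros)
    then have "((\<lambda>\<theta>. exp (\<theta> * ((real (isolated_count n X) - mu) / sig)) * pmf (er_graph n p) X) has_real_derivative
       exp (\<theta> * ((real (isolated_count n X) - mu) / sig)) * ((real (isolated_count n X) - mu) / sig) * pmf (er_graph n p) X) (at \<theta>)"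
      unfolding k_def .
    then show "((\<lambda>\<theta>. ES n mu sig \<theta> X * pmf (er_graph n p) X) has_real_derivative
       (real (isolated_count n X) - mu) / sig * ES n mu sig \<theta> X * pmf (er_graph n p) X) (at \<theta>)"
      unfolding ES_def by (simp add: mult_ac)
  qed
  then show ?thesis by (simp only: e1 e2)
qed

lemma M_pos: "measure_pmf.expectation (er_graph n p) (ES n mu sig \<theta>) > 0"
proof -
  have "measure_pmf.expectation (er_graph n p) (ES n mu sig \<theta>) = (\<Sum>X\<in>set_pmf (er_graph n p). ES n mu sig \<theta> X * pmf (er_graph n p) X)"
    by (simp add: E_sum[OF fin_Om])
  also have "\<dots> > 0"
    by (intro sum_pos fin_Om mult_pos_pos ES_pos) (auto simp: set_pmf_not_empty pmf_positive)
  finally show ?thesis .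
qed

lemma chernoff:
  fixes c :: "((nat \<times> nat) \<Rightarrow> bool) \<Rightarrow> real"
  shows "measure_pmf.prob (er_graph n p) {X. 0 \<le> c X} \<le> measure_pmf.expectation (er_graph n p) (\<lambda>X. exp (c X))"
proof -
  have "measure_pmf.prob (er_graph n p) {X. 0 \<le> c X} = measure_pmf.expectation (er_graph n p) (indicator {X. 0 \<le> c X})"
    by simp
  also have "\<dots> \<le> measure_pmf.expectation (er_graph n p) (\<lambda>X. exp (c X))"
  proof (intro integral_mono int_Om)
    fix X show "indicator {X. 0 \<le> c X} X \<le> exp (c X)"
      by (auto simp: indicator_def intro: order.trans[OF _ exp_ge_add_one_self] less_imp_le)
  qed
  finally show ?thesis .
qed

theorem theorem1p1:
  fixes n :: nat and p :: real
  assumes "n \<ge> 2" and "0 < p" and "p < 1"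
  defines "\<mu> \<equiv> real n * (1 - p) ^ (n - 1)"
      and "\<sigma> \<equiv> sqrt (real n * (1 - p) ^ (n - 1) *
                    (1 + real n * p * (1 - p) ^ (n - 2) - (1 - p) ^ (n - 2)))"
  defines "Y \<equiv> (\<lambda>X. real (isolated_count n X))"
  defines "M \<equiv> (\<lambda>\<theta>::real. measure_pmf.expectation (er_graph n p)
                    (\<lambda>X. exp (\<theta> * (Y X - \<mu>) / \<sigma>)))"
      and "\<gamma> \<equiv> (\<lambda>s::real. exp s * (p * exp s + 1 - p) ^ (n - 2) * (real n * p * exp s + 1 - p)
                    + (real n - 1) * p + 1)"
  defines "H \<equiv> (\<lambda>\<theta>::real. \<mu> / (2 * \<sigma>\<^sup>2) * integral {0..\<theta>} (\<lambda>s. s * \<gamma> (s / \<sigma>)))"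
  shows "(\<forall>\<theta>\<ge>0. M \<theta> \<le> exp (H \<theta>))
       \<and> (\<forall>t>0. measure_pmf.prob (er_graph n p) {X. (Y X - \<mu>) / \<sigma> \<ge> t}
                 \<le> (INF \<theta>\<in>{0..}. exp (- \<theta> * t + H \<theta>)))
       \<and> (\<forall>\<theta>\<le>0. M \<theta> \<le> exp (\<mu> * \<theta>\<^sup>2 / \<sigma>\<^sup>2))
       \<and> (\<forall>t>0. measure_pmf.prob (er_graph n p) {X. (Y X - \<mu>) / \<sigma> \<le> - t}
                 \<le> exp (- (t\<^sup>2 * \<sigma>\<^sup>2 / (4 * \<mu>))))"
proof -
  let ?E = "measure_pmf.expectation (er_graph n p)"
  have n1: "n \<ge> 1" using assms(1) by simp
  have p0: "0 \<le> p" "p \<le> 1" using assms(2,3) by auto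
  have q0: "0 < 1 - p" using assms(3) by simp
  have qle: "(1 - p) ^ (n - 2) \<le> 1" using q0 assms(2) by (intro power_le_one) auto
  have qpos: "(1 - p) ^ (n - 2) > 0" using q0 by simp
  have mu_pos: "\<mu> > 0" unfolding \<mu>_def using q0 assms(1) by simp
  define B where "B = 1 + real n * p * (1 - p) ^ (n - 2) - (1 - p) ^ (n - 2)"
  have npq: "real n * p * (1 - p) ^ (n - 2) > 0" using assms(1,2) qpos by simp
  have B_pos: "B > 0" unfolding B_def using qle npq by linarith
  have sig_eq: "\<sigma> = sqrt (\<mu> * B)" unfolding \<sigma>_def \<mu>_def B_def ..
  have sig_pos: "\<sigma> > 0" using mu_pos B_pos by (simp add: sig_eq)
  have sig2: "\<sigma>\<^sup>2 = \<mu> * B" using mu_pos B_pos by (simp add: sig_eq)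
  have M_eq: "M = (\<lambda>\<theta>. ?E (ES n \<mu> \<sigma> \<theta>))" unfolding M_def Y_def ES_def by (intro ext) simp
  have Mpos: "M x > 0" for x unfolding M_eq by (rule M_pos)
  define Md where "Md x = ?E (\<lambda>X. (real (isolated_count n X) - \<mu>) / \<sigma> * ES n \<mu> \<sigma> x X)" for x
  have Mder: "(M has_real_derivative Md x) (at x)" for x unfolding M_eq Md_def by (rule M_deriv)
  have Mid: "Md x = \<mu> / (\<sigma> * real n) * (\<Sum>v\<in>{1..n}. ?E (\<lambda>X. ES n \<mu> \<sigma> x (kill v X) - ES n \<mu> \<sigma> x X))" for x
    unfolding Md_def by (rule deriv_identity[OF n1 p0]) (simp add: \<mu>_def)
  have M0: "M 0 = 1" unfolding M_eq ES_def by simp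
  have fac_nn: "\<mu> / (\<sigma> * real n) \<ge> 0" using mu_pos sig_pos by simp
  have lnMder: "((\<lambda>x. ln (M x)) has_real_derivative Md x / M x) (at x)" for x
    using Mder[of x] Mpos[of x] by (auto intro!: derivative_eq_intros)
  have part3: "M \<theta> \<le> exp (\<mu> * \<theta>\<^sup>2 / \<sigma>\<^sup>2)" if th: "\<theta> \<le> 0" for \<theta>
  proof -
    define \<phi> where "\<phi> x = ln (M x) - \<mu> * x\<^sup>2 / \<sigma>\<^sup>2" for x
    have \<phi>der: "(\<phi> has_real_derivative (Md x / M x - \<mu> * (2 * x) / \<sigma>\<^sup>2)) (at x)" for x
    proof -
      have "((\<lambda>x. \<mu> * x\<^sup>2 / \<sigma>\<^sup>2) has_real_derivative \<mu> * (2 * x) / \<sigma>\<^sup>2) (at x)"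
        using sig_pos by (auto intro!: derivative_eq_intros simp: field_simps power2_eq_square)
      then show ?thesis unfolding \<phi>_def by (intro DERIV_diff lnMder)
    qed
    have "\<phi> \<theta> \<le> \<phi> 0"
    proof (rule DERIV_nonneg_imp_increasing_open[OF th])
      fix x :: real assume x: "\<theta> < x" "x < 0"
      have "Md x \<ge> \<mu> / (\<sigma> * real n) * (2 * real n * (x / \<sigma>) * M x)"
        unfolding Mid M_eq using K_minus[OF sig_pos, of x n p \<mu>] x fac_nn
        by (intro mult_left_mono) auto
      also have "\<mu> / (\<sigma> * real n) * (2 * real n * (x / \<sigma>) * M x) = \<mu> * (2 * x) / \<sigma>\<^sup>2 * M x"
        using n1 sig_pos by (simp add: field_simps power2_eq_square)
      finally have "Md x / M x \<ge> \<mu> * (2 * x) / \<sigma>\<^sup>2" using Mpos[of x] by (simp add: pos_le_divide_eq)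
      then show "\<exists>y. (\<phi> has_real_derivative y) (at x) \<and> 0 \<le> y" using \<phi>der[of x] by force
    next
      show "continuous_on {\<theta>..0} \<phi>"
        by (rule continuous_at_imp_continuous_on) (use \<phi>der DERIV_isCont in blast)
    qed
    also have "\<phi> 0 = 0" unfolding \<phi>_def M0 by simp
    finally have "ln (M \<theta>) \<le> \<mu> * \<theta>\<^sup>2 / \<sigma>\<^sup>2" unfolding \<phi>_def by simp
    then have "exp (ln (M \<theta>)) \<le> exp (\<mu> * \<theta>\<^sup>2 / \<sigma>\<^sup>2)" by simp
    then show ?thesis using Mpos[of \<theta>] by simp
  qed
  define g where "g s = s * \<gamma> (s / \<sigma>)" for s
  have gcont: "continuous_on S g" for S unfolding g_def \<gamma>_def using sig_pos
    by (intro continuous_intros) auto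
  have Hg: "H x = \<mu> / (2 * \<sigma>\<^sup>2) * integral {0..x} g" for x unfolding H_def g_def ..
  have part1: "M \<theta> \<le> exp (H \<theta>)" if th: "\<theta> \<ge> 0" for \<theta>
  proof -
    have Hder: "(H has_real_derivative \<mu> / (2 * \<sigma>\<^sup>2) * g x) (at x within {0..\<theta>})" if x: "x \<in> {0..\<theta>}" for x
      unfolding Hg[abs_def] by (intro DERIV_cmult integral_has_real_derivative gcont x)
    define \<psi> where "\<psi> x = ln (M x) - H x" for x
    have "\<psi> \<theta> \<le> \<psi> 0"
    proof (rule DERIV_nonpos_imp_decreasing_open[OF th])
      fix x :: real assume x: "0 < x" "x < \<theta>"
      have "at x within {0..\<theta>} = at x" using x by (intro at_within_interior) auto
      then have Hd: "(H has_real_derivative \<mu> / (2 * \<sigma>\<^sup>2) * g x) (at x)" using Hder[of x] x by simp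
      have "Md x \<le> \<mu> / (\<sigma> * real n) * (real n * ((x / \<sigma>) / 2 * \<gamma> (x / \<sigma>)) * M x)"
        unfolding Mid M_eq using K_plus[OF assms(1) p0 sig_pos, of x \<mu>] x fac_nn
        by (intro mult_left_mono) (auto simp: \<gamma>_def)
      also have "\<dots> = \<mu> / (2 * \<sigma>\<^sup>2) * g x * M x"
        using n1 sig_pos by (simp add: g_def field_simps power2_eq_square)
      finally have "Md x / M x \<le> \<mu> / (2 * \<sigma>\<^sup>2) * g x" using Mpos[of x] by (simp add: pos_divide_le_eq)
      moreover have "(\<psi> has_real_derivative (Md x / M x - \<mu> / (2 * \<sigma>\<^sup>2) * g x)) (at x)"
        unfolding \<psi>_def by (intro DERIV_diff lnMder Hd)
      ultimately show "\<exists>y. (\<psi> has_real_derivative y) (at x) \<and> y \<le> 0" by force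
    next
      have c1: "continuous_on {0..\<theta>} (\<lambda>x. ln (M x))"
        by (rule continuous_at_imp_continuous_on) (use lnMder DERIV_isCont in blast)
      have c2: "continuous_on {0..\<theta>} H"
        unfolding continuous_on_eq_continuous_within using Hder DERIV_continuous by blast
      show "continuous_on {0..\<theta>} \<psi>" unfolding \<psi>_def by (intro continuous_on_diff c1 c2)
    qed
    also have "\<psi> 0 = 0" unfolding \<psi>_def M0 Hg by simp
    finally have "ln (M \<theta>) \<le> H \<theta>" unfolding \<psi>_def by simp
    then have "exp (ln (M \<theta>)) \<le> exp (H \<theta>)" by simp
    then show ?thesis using Mpos[of \<theta>] by simp
  qed
  have chern: "measure_pmf.prob (er_graph n p) {X. 0 \<le> \<theta> * ((Y X - \<mu>) / \<sigma>) - \<theta> * c} \<le> exp (- \<theta> * c) * M \<theta>" for \<theta> c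
  proof -
    have "measure_pmf.prob (er_graph n p) {X. 0 \<le> \<theta> * ((Y X - \<mu>) / \<sigma>) - \<theta> * c}
        \<le> ?E (\<lambda>X. exp (\<theta> * ((Y X - \<mu>) / \<sigma>) - \<theta> * c))" by (rule chernoff)
    also have "\<dots> = ?E (\<lambda>X. exp (- \<theta> * c) * exp (\<theta> * (Y X - \<mu>) / \<sigma>))"
      by (simp add: exp_diff exp_minus field_simps)
    also have "\<dots> = exp (- \<theta> * c) * M \<theta>" unfolding M_def by simp
    finally show ?thesis .
  qed
  have part2: "measure_pmf.prob (er_graph n p) {X. (Y X - \<mu>) / \<sigma> \<ge> t}
                 \<le> (INF \<theta>\<in>{0..}. exp (- \<theta> * t + H \<theta>))" if t: "t > 0" for t
  proof (rule cINF_greatest)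
    fix \<theta> :: real assume th: "\<theta> \<in> {0..}"
    have "measure_pmf.prob (er_graph n p) {X. (Y X - \<mu>) / \<sigma> \<ge> t}
        \<le> measure_pmf.prob (er_graph n p) {X. 0 \<le> \<theta> * ((Y X - \<mu>) / \<sigma>) - \<theta> * t}"
    proof (intro measure_pmf.finite_measure_mono subsetI)
      fix X assume "X \<in> {X. (Y X - \<mu>) / \<sigma> \<ge> t}"
      then have "\<theta> * t \<le> \<theta> * ((Y X - \<mu>) / \<sigma>)" using th by (intro mult_left_mono) auto
      then show "X \<in> {X. 0 \<le> \<theta> * ((Y X - \<mu>) / \<sigma>) - \<theta> * t}" by simp
    qed auto
    also have "\<dots> \<le> exp (- \<theta> * t) * M \<theta>" by (rule chern)
    also have "\<dots> \<le> exp (- \<theta> * t) * exp (H \<theta>)" using part1[of \<theta>] th by (intro mult_left_mono) auto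
    also have "\<dots> = exp (- \<theta> * t + H \<theta>)" by (simp only: exp_add)
    finally show "measure_pmf.prob (er_graph n p) {X. (Y X - \<mu>) / \<sigma> \<ge> t} \<le> exp (- \<theta> * t + H \<theta>)" .
  qed auto
  have part4: "measure_pmf.prob (er_graph n p) {X. (Y X - \<mu>) / \<sigma> \<le> - t}
                 \<le> exp (- (t\<^sup>2 * \<sigma>\<^sup>2 / (4 * \<mu>)))" if t: "t > 0" for t
  proof -
    define \<theta> where "\<theta> = - (t * \<sigma>\<^sup>2 / (2 * \<mu>))"
    have th: "\<theta> \<le> 0" unfolding \<theta>_def using t mu_pos by simp
    have "measure_pmf.prob (er_graph n p) {X. (Y X - \<mu>) / \<sigma> \<le> - t}
        \<le> measure_pmf.prob (er_graph n p) {X. 0 \<le> \<theta> * ((Y X - \<mu>) / \<sigma>) - \<theta> * (- t)}"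
    proof (intro measure_pmf.finite_measure_mono subsetI)
      fix X assume "X \<in> {X. (Y X - \<mu>) / \<sigma> \<le> - t}"
      then have "(Y X - \<mu>) / \<sigma> - (- t) \<le> 0" by simp
      then have "0 \<le> \<theta> * ((Y X - \<mu>) / \<sigma> - (- t))" using th by (simp add: mult_nonpos_nonpos)
      then show "X \<in> {X. 0 \<le> \<theta> * ((Y X - \<mu>) / \<sigma>) - \<theta> * (- t)}"
        by (simp only: right_diff_distrib mem_Collect_eq)
    qed auto
    also have "\<dots> \<le> exp (- \<theta> * (- t)) * M \<theta>" by (rule chern)
    also have "\<dots> \<le> exp (- \<theta> * (- t)) * exp (\<mu> * \<theta>\<^sup>2 / \<sigma>\<^sup>2)" using part3[OF th] by (intro mult_left_mono) auto
    also have "\<dots> = exp (- \<theta> * (- t) + \<mu> * \<theta>\<^sup>2 / \<sigma>\<^sup>2)" by (simp only: exp_add)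
    also have "- \<theta> * (- t) + \<mu> * \<theta>\<^sup>2 / \<sigma>\<^sup>2 = - (t\<^sup>2 * \<sigma>\<^sup>2 / (4 * \<mu>))"
      unfolding \<theta>_def using mu_pos sig_pos by (simp add: field_simps power2_eq_square)
    finally show ?thesis .
  qed
  show ?thesis using part1 part2 part3 part4 by blast
qed

end
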